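(* Let $X$ be a locale with frame presentation $\mathcal{O}X=\langle G\mid R\rangle$, and regard $\mathcal{O}X$ as the locale whose frame is the Scott topology on the complete lattice $\mathcal{O}X$. If there exists a semi-open quotient locale map $e\colon\Sigma^{\Sigma^G}\to\mathcal{O}X$, then $X$ is locally compact (equivalently, $\mathcal{O}X$ is a continuous dcpo).
   Context: Frames are complete lattices with finite meets distributing over arbitrary joins; a locale $X$ is a frame $\mathcal{O}X$ and a locale map $f\colon X\to Y$ is a frame homomorphism $f^*\colon\mathcal{O}Y\to\mathcal{O}X$. $\Sigma$ is the Sierpiński locale; for a set $G$, $\Sigma^G$ is the locale whose frame is the free frame on $G$, and $\Sigma^{\Sigma^G}$ is its exponential (the locale of Scott opens of the free frame on $G$). A presentation $\mathcal{O}X=\langle G\mid R\rangle$ means $\mathcal{O}X$ is the quotient of the free frame on $G$ by the congruence generated by $R$. Scott topology: $V$ open iff upward closed and whenever the join of a directed set lies in $V$, some member does. A locale map $e\colon Y\to Z$ is a semi-open quotient if $e^*$ has a suplattice retraction, i.e. a map $r\colon\mathcal{O}Y\to\mathcal{O}Z$ preserving arbitrary joins with $r\circ e^*=\mathrm{id}$. Way-below: $a\ll b$ iff whenever $b\le\bigvee D$ with $D$ directed, $a\le d$ for some $d\in D$; a dcpo is continuous if each $b$ is the directed join of $\{a\mid a\ll b\}$. A locale $X$ is locally compact iff $\mathcal{O}X$ is continuous. *)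

theory Defs
  imports Main
begin

definition is_frame :: "'a::complete_lattice itself \<Rightarrow> bool" where
  "is_frame _ \<longleftrightarrow> (\<forall>(a::'a) S. inf a (Sup S) = Sup ((inf a) ` S))"

definition directed_set :: "'a::order set \<Rightarrow> bool" where
  "directed_set D \<longleftrightarrow> D \<noteq> {} \<and> (\<forall>x\<in>D. \<forall>y\<in>D. \<exists>z\<in>D. x \<le> z \<and> y \<le> z)"

definition scott_open :: "'a::complete_lattice set \<Rightarrow> bool" where
  "scott_open V \<longleftrightarrow> (\<forall>x y. x \<in> V \<longrightarrow> x \<le> y \<longrightarrow> y \<in> V) \<and>
     (\<forall>D. directed_set D \<longrightarrow> Sup D \<in> V \<longrightarrow> (\<exists>d\<in>D. d \<in> V))"

definition way_below :: "'a::complete_lattice \<Rightarrow> 'a \<Rightarrow> bool" (infix "\<lless>" 50) where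
  "a \<lless> b \<longleftrightarrow> (\<forall>D. directed_set D \<longrightarrow> b \<le> Sup D \<longrightarrow> (\<exists>d\<in>D. a \<le> d))"

definition continuous_lattice :: "'a::complete_lattice itself \<Rightarrow> bool" where
  "continuous_lattice _ \<longleftrightarrow>
     (\<forall>b::'a. directed_set {a. a \<lless> b} \<and> b = Sup {a. a \<lless> b})"

text \<open>The free frame on a set G, concretely: the opens of \<Sigma>^G, i.e. the upward-closed
  families (under \<subseteq>) of finite subsets of G. The generator g corresponds to
  {F. g \<in> F}.\<close>
definition fin_subsets :: "'g set \<Rightarrow> 'g set set" where
  "fin_subsets G = {F. finite F \<and> F \<subseteq> G}"

definition free_frame :: "'g set \<Rightarrow> 'g set set set" where
  "free_frame G = {U. U \<subseteq> fin_subsets G \<and>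
      (\<forall>F F'. F \<in> U \<longrightarrow> F \<subseteq> F' \<longrightarrow> F' \<in> fin_subsets G \<longrightarrow> F' \<in> U)}"

text \<open>Scott-open subsets of the free frame on G (ordered by \<subseteq>, directed joins are unions).
  These form the frame of opens of the exponential \<Sigma>^(\<Sigma>^G).\<close>
definition scott_open_free :: "'g set \<Rightarrow> 'g set set set \<Rightarrow> bool" where
  "scott_open_free G V \<longleftrightarrow> V \<subseteq> free_frame G \<and>
     (\<forall>U U'. U \<in> V \<longrightarrow> U' \<in> free_frame G \<longrightarrow> U \<subseteq> U' \<longrightarrow> U' \<in> V) \<and>
     (\<forall>D. D \<subseteq> free_frame G \<longrightarrow> D \<noteq> {} \<longrightarrow>
          (\<forall>x\<in>D. \<forall>y\<in>D. \<exists>z\<in>D. x \<subseteq> z \<and> y \<subseteq> z) \<longrightarrow>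
          \<Union>D \<in> V \<longrightarrow> (\<exists>d\<in>D. d \<in> V))"

text \<open>A frame presentation \<langle>G | R\<rangle> of the frame 'a amounts to a surjective frame
  homomorphism from the free frame on G onto 'a (the quotient map).\<close>
definition presentation_map :: "'g set \<Rightarrow> ('g set set \<Rightarrow> 'a::complete_lattice) \<Rightarrow> bool" where
  "presentation_map G f \<longleftrightarrow>
     f (fin_subsets G) = top \<and>
     (\<forall>U\<in>free_frame G. \<forall>U'\<in>free_frame G. f (U \<inter> U') = inf (f U) (f U')) \<and>
     (\<forall>S. S \<subseteq> free_frame G \<longrightarrow> f (\<Union>S) = Sup (f ` S)) \<and>
     f ` free_frame G = UNIV"

text \<open>A locale map e : \<Sigma>^(\<Sigma>^G) \<rightarrow> (Scott locale of 'a), given by its frame homomorphism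
  e* from the Scott opens of 'a to the Scott opens of the free frame on G.\<close>
definition scott_locale_map :: "'g set \<Rightarrow> ('a::complete_lattice set \<Rightarrow> 'g set set set) \<Rightarrow> bool" where
  "scott_locale_map G e \<longleftrightarrow>
     (\<forall>V. scott_open V \<longrightarrow> scott_open_free G (e V)) \<and>
     e UNIV = free_frame G \<and>
     (\<forall>V W. scott_open V \<longrightarrow> scott_open W \<longrightarrow> e (V \<inter> W) = e V \<inter> e W) \<and>
     (\<forall>S. (\<forall>V\<in>S. scott_open V) \<longrightarrow> e (\<Union>S) = \<Union>(e ` S))"

definition semi_open_quotient :: "'g set \<Rightarrow> ('a::complete_lattice set \<Rightarrow> 'g set set set) \<Rightarrow> bool" where
  "semi_open_quotient G e \<longleftrightarrow> scott_locale_map G e \<and>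
     (\<exists>r :: 'g set set set \<Rightarrow> 'a set.
        (\<forall>V. scott_open_free G V \<longrightarrow> scott_open (r V)) \<and>
        (\<forall>S. (\<forall>V\<in>S. scott_open_free G V) \<longrightarrow> r (\<Union>S) = \<Union>(r ` S)) \<and>
        (\<forall>V. scott_open V \<longrightarrow> r (e V) = V))"

end

theory Submission
  imports Defs
begin

definition upc :: "'g set \<Rightarrow> 'g set set \<Rightarrow> 'g set set" where
  "upc G P = {F \<in> fin_subsets G. \<exists>F0\<in>P. F0 \<subseteq> F}"

definition bas :: "'g set \<Rightarrow> 'g set set \<Rightarrow> 'g set set set" where
  "bas G P = {U \<in> free_frame G. P \<subseteq> U}"

lemma upc_free: "P \<subseteq> fin_subsets G \<Longrightarrow> upc G P \<in> free_frame G"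
  unfolding upc_def free_frame_def by blast

lemma upc_sub: "U \<in> free_frame G \<Longrightarrow> P \<subseteq> U \<Longrightarrow> upc G P \<subseteq> U"
  unfolding upc_def free_frame_def by blast

lemma dir_fin:
  assumes "finite P" "D \<noteq> {}" "\<forall>x\<in>D. \<forall>y\<in>D. \<exists>z\<in>D. x \<subseteq> z \<and> y \<subseteq> z"
    "P \<subseteq> \<Union>D"
  shows "\<exists>d\<in>D. P \<subseteq> d"
  using assms
proof (induction P rule: finite_induct)
  case empty
  then show ?case by blast
next
  case (insert x F)
  then obtain d where d: "d \<in> D" "F \<subseteq> d" by blast
  from insert obtain d' where d': "d' \<in> D" "x \<in> d'" by blast
  from insert(5) d d' obtain z where "z \<in> D" "d \<subseteq> z" "d' \<subseteq> z" by meson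
  then show ?case using d d' by blast
qed

lemma bas_open:
  assumes "finite P"
  shows "scott_open_free G (bas G P)"
  unfolding scott_open_free_def
proof (intro conjI allI impI)
  show "bas G P \<subseteq> free_frame G" unfolding bas_def by blast
next
  fix U U' assume "U \<in> bas G P" "U' \<in> free_frame G" "U \<subseteq> U'"
  then show "U' \<in> bas G P" unfolding bas_def by blast
next
  fix D assume D: "D \<subseteq> free_frame G" "D \<noteq> {}"
    "\<forall>x\<in>D. \<forall>y\<in>D. \<exists>z\<in>D. x \<subseteq> z \<and> y \<subseteq> z" "\<Union>D \<in> bas G P"
  then have "P \<subseteq> \<Union>D" unfolding bas_def by blast
  then obtain d where "d \<in> D" "P \<subseteq> d" using dir_fin[OF assms D(2,3)] by blast
  then show "\<exists>d\<in>D. d \<in> bas G P" using D(1) unfolding bas_def by blast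
qed

lemma vc_open: "scott_open {x::'a::complete_lattice. \<not> x \<le> c}"
  unfolding scott_open_def
proof (intro conjI allI impI)
  fix x y :: 'a assume "x \<in> {x. \<not> x \<le> c}" "x \<le> y"
  then show "y \<in> {x. \<not> x \<le> c}" using order_trans by blast
next
  fix D :: "'a set" assume "directed_set D" "Sup D \<in> {x. \<not> x \<le> c}"
  then show "\<exists>d\<in>D. d \<in> {x. \<not> x \<le> c}" by (auto intro: Sup_least)
qed

lemma open_decomp:
  assumes "scott_open_free G V"
  shows "V = \<Union>(bas G ` {P. finite P \<and> P \<subseteq> fin_subsets G \<and> upc G P \<in> V})"
proof
  show "V \<subseteq> \<Union>(bas G ` {P. finite P \<and> P \<subseteq> fin_subsets G \<and> upc G P \<in> V})"
  proof
    fix U assume U: "U \<in> V"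
    have UF: "U \<in> free_frame G" using U assms unfolding scott_open_free_def by blast
    define D where "D = {upc G P | P. finite P \<and> P \<subseteq> U}"
    have Ufs: "U \<subseteq> fin_subsets G" using UF unfolding free_frame_def by blast
    have D1: "D \<subseteq> free_frame G"
    proof
      fix x assume "x \<in> D"
      then obtain P where "x = upc G P" "P \<subseteq> U" unfolding D_def by blast
      then show "x \<in> free_frame G" using upc_free Ufs by blast
    qed
    have D2: "D \<noteq> {}" unfolding D_def by blast
    have D3: "\<forall>x\<in>D. \<forall>y\<in>D. \<exists>z\<in>D. x \<subseteq> z \<and> y \<subseteq> z"
    proof (intro ballI)
      fix x y assume "x \<in> D" "y \<in> D"
      then obtain P Q where PQ: "x = upc G P" "y = upc G Q" "finite P" "P \<subseteq> U" "finite Q" "Q \<subseteq> U"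
        unfolding D_def by blast
      have "upc G (P \<union> Q) \<in> D" unfolding D_def using PQ by blast
      moreover have "x \<subseteq> upc G (P \<union> Q)" "y \<subseteq> upc G (P \<union> Q)"
        unfolding PQ upc_def by auto
      ultimately show "\<exists>z\<in>D. x \<subseteq> z \<and> y \<subseteq> z" by blast
    qed
    have "\<Union>D = U"
    proof
      show "\<Union>D \<subseteq> U"
      proof
        fix F assume "F \<in> \<Union>D"
        then obtain P where "P \<subseteq> U" "F \<in> upc G P" unfolding D_def by blast
        then show "F \<in> U" using upc_sub[OF UF] by blast
      qed
      show "U \<subseteq> \<Union>D"
      proof
        fix F assume "F \<in> U"
        moreover have "F \<in> fin_subsets G" using Ufs \<open>F \<in> U\<close> by blast
        ultimately have "F \<in> upc G {F}" "upc G {F} \<in> D" unfolding upc_def D_def by auto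
        then show "F \<in> \<Union>D" by blast
      qed
    qed
    have dirV: "\<forall>D. D \<subseteq> free_frame G \<longrightarrow> D \<noteq> {} \<longrightarrow>
          (\<forall>x\<in>D. \<forall>y\<in>D. \<exists>z\<in>D. x \<subseteq> z \<and> y \<subseteq> z) \<longrightarrow>
          \<Union>D \<in> V \<longrightarrow> (\<exists>d\<in>D. d \<in> V)" using assms unfolding scott_open_free_def by blast
    have "\<exists>d\<in>D. d \<in> V" using dirV D1 D2 D3 \<open>\<Union>D = U\<close> U by blast
    then obtain P where P: "finite P" "P \<subseteq> U" "upc G P \<in> V" unfolding D_def by blast
    have "P \<subseteq> fin_subsets G" using P Ufs by blast
    moreover have "U \<in> bas G P" using UF P unfolding bas_def by blast
    ultimately show "U \<in> \<Union>(bas G ` {P. finite P \<and> P \<subseteq> fin_subsets G \<and> upc G P \<in> V})"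
      using P by blast
  qed
next
  show "\<Union>(bas G ` {P. finite P \<and> P \<subseteq> fin_subsets G \<and> upc G P \<in> V}) \<subseteq> V"
  proof
    fix U assume "U \<in> \<Union>(bas G ` {P. finite P \<and> P \<subseteq> fin_subsets G \<and> upc G P \<in> V})"
    then obtain P where P: "P \<subseteq> fin_subsets G" "upc G P \<in> V" "U \<in> free_frame G" "P \<subseteq> U"
      unfolding bas_def by blast
    have "upc G P \<subseteq> U" using upc_sub P by blast
    then show "U \<in> V" using assms P unfolding scott_open_free_def by blast
  qed
qed

lemma wb_le:
  assumes "(a::'a::complete_lattice) \<lless> b" shows "a \<le> b"
proof -
  have d: "directed_set {b}" unfolding directed_set_def by simp
  have "b \<le> Sup {b}" by simp
  then obtain d where "d \<in> {b}" "a \<le> d" using assms d unfolding way_below_def by blast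
  then show ?thesis by simp
qed

theorem proposition3p9:
  fixes G :: "'g set" and f :: "'g set set \<Rightarrow> 'a::complete_lattice"
  assumes "is_frame TYPE('a)"
    and "presentation_map G f"
    and "\<exists>e :: 'a set \<Rightarrow> 'g set set set. semi_open_quotient G e"
  shows "continuous_lattice TYPE('a)"
proof -
  obtain e :: "'a set \<Rightarrow> 'g set set set" where eq: "semi_open_quotient G e" using assms(3) by blast
  have eq': "scott_locale_map G e \<and>
     (\<exists>r :: 'g set set set \<Rightarrow> 'a set.
        (\<forall>V. scott_open_free G V \<longrightarrow> scott_open (r V)) \<and>
        (\<forall>S. (\<forall>V\<in>S. scott_open_free G V) \<longrightarrow> r (\<Union>S) = \<Union>(r ` S)) \<and>
        (\<forall>V. scott_open V \<longrightarrow> r (e V) = V))" using eq unfolding semi_open_quotient_def by assumption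
  then have em: "scott_locale_map G e" by (rule conjunct1)
  from eq' obtain r :: "'g set set set \<Rightarrow> 'a set" where
    r1: "\<forall>V. scott_open_free G V \<longrightarrow> scott_open (r V)" and
    r2: "\<forall>S. (\<forall>V\<in>S. scott_open_free G V) \<longrightarrow> r (\<Union>S) = \<Union>(r ` S)" and
    r3: "\<forall>V. scott_open V \<longrightarrow> r (e V) = V"
    by (elim conjE exE)
  have em': "(\<forall>V. scott_open V \<longrightarrow> scott_open_free G (e V)) \<and>
     e UNIV = free_frame G \<and>
     (\<forall>V W. scott_open V \<longrightarrow> scott_open W \<longrightarrow> e (V \<inter> W) = e V \<inter> e W) \<and>
     (\<forall>S. (\<forall>V\<in>S. scott_open V) \<longrightarrow> e (\<Union>S) = \<Union>(e ` S))"
    using em unfolding scott_locale_map_def by assumption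
  have e1: "\<And>V. scott_open V \<Longrightarrow> scott_open_free G (e V)"
    using em' by (elim conjE) (erule allE, erule mp)
  have e4: "\<And>S. (\<forall>V\<in>S. scott_open V) \<Longrightarrow> e (\<Union>S) = \<Union>(e ` S)"
    using em' by (elim conjE) (erule allE, erule mp)
  have rmono: "r A \<subseteq> r B" if "scott_open_free G A" "scott_open_free G B" "A \<subseteq> B" for A B
  proof -
    have "r B = r (\<Union>{A, B})" using that by (simp add: sup.absorb2)
    also have "\<dots> = r A \<union> r B" using r2[rule_format, of "{A, B}"] that by blast
    finally show ?thesis by blast
  qed
  have main: "b \<le> Sup {a. a \<lless> b}" for b :: 'a
  proof (rule ccontr)
    define s where "s = Sup {a. a \<lless> b}"
    assume "\<not> b \<le> Sup {a. a \<lless> b}"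
    then have bs: "\<not> b \<le> s" unfolding s_def .
    define Vs where "Vs = {x::'a. \<not> x \<le> s}"
    have Vso: "scott_open Vs" unfolding Vs_def by (rule vc_open)
    have eVs: "scott_open_free G (e Vs)" using e1 Vso by blast
    define Ps where "Ps = {P. finite P \<and> P \<subseteq> fin_subsets G \<and> upc G P \<in> e Vs}"
    have "Vs = r (e Vs)" using r3 Vso by simp
    also have "\<dots> = r (\<Union>(bas G ` Ps))" using open_decomp[OF eVs] unfolding Ps_def by simp
    also have "\<dots> = \<Union>(r ` bas G ` Ps)"
    proof -
      have "\<forall>V\<in>bas G ` Ps. scott_open_free G V" using bas_open unfolding Ps_def by blast
      then show ?thesis using r2 by simp
    qed
    finally have "b \<in> \<Union>(r ` bas G ` Ps)" using bs unfolding Vs_def by blast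
    then obtain P where P: "P \<in> Ps" "b \<in> r (bas G P)" by blast
    define Ob where "Ob = r (bas G P)"
    have Po: "finite P" "upc G P \<in> e Vs" using P(1) unfolding Ps_def by auto
    have Oo: "scott_open Ob" unfolding Ob_def using r1 bas_open[OF Po(1)] by blast
    have bO: "b \<in> Ob" using P unfolding Ob_def by simp
    show False
    proof (cases "\<exists>x. \<not> x \<le> s \<and> (\<forall>y\<in>Ob. x \<le> y)")
      case True
      then obtain x where x: "\<not> x \<le> s" "\<forall>y\<in>Ob. x \<le> y" by blast
      have "x \<lless> b" unfolding way_below_def
      proof (intro allI impI)
        fix D :: "'a set" assume D: "directed_set D" "b \<le> Sup D"
        then have "Sup D \<in> Ob" using Oo bO unfolding scott_open_def by blast
        then obtain d where "d \<in> D" "d \<in> Ob" using Oo D unfolding scott_open_def by blast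
        then show "\<exists>d\<in>D. x \<le> d" using x by blast
      qed
      then have "x \<le> s" unfolding s_def by (simp add: Sup_upper)
      then show False using x by blast
    next
      case False
      define S0 where "S0 = (\<lambda>y. {x::'a. \<not> x \<le> y}) ` Ob"
      have S0o: "\<forall>V\<in>S0. scott_open V" unfolding S0_def using vc_open by blast
      have cov: "Vs \<subseteq> \<Union>S0"
      proof
        fix x assume "x \<in> Vs"
        then have "\<not> x \<le> s" unfolding Vs_def by simp
        then obtain y where "y \<in> Ob" "\<not> x \<le> y" using False by blast
        then show "x \<in> \<Union>S0" unfolding S0_def by blast
      qed
      have "e Vs \<subseteq> e (\<Union>S0)"
      proof -
        have "\<Union>S0 = \<Union>(insert Vs S0)" using cov by (simp add: sup.absorb2)
        moreover have "\<forall>V\<in>insert Vs S0. scott_open V" using S0o Vso by blast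
        ultimately have "e (\<Union>S0) = \<Union>(e ` insert Vs S0)" using e4[of "insert Vs S0"] by simp
        then show ?thesis by blast
      qed
      also have "\<dots> = \<Union>(e ` S0)" using e4[OF S0o] by simp
      finally have "upc G P \<in> \<Union>(e ` S0)" using Po by blast
      then obtain W where "W \<in> S0" "upc G P \<in> e W" by blast
      then obtain y where y: "y \<in> Ob" "upc G P \<in> e {x. \<not> x \<le> y}" unfolding S0_def by blast
      have Wy: "scott_open {x::'a. \<not> x \<le> y}" by (rule vc_open)
      have eWy: "scott_open_free G (e {x. \<not> x \<le> y})" using e1 Wy by blast
      have sub: "bas G P \<subseteq> e {x. \<not> x \<le> y}"
      proof
        fix U assume "U \<in> bas G P"
        then have "U \<in> free_frame G" "upc G P \<subseteq> U" unfolding bas_def using upc_sub by blast+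
        moreover have "\<forall>U U'. U \<in> e {x. \<not> x \<le> y} \<longrightarrow> U' \<in> free_frame G \<longrightarrow> U \<subseteq> U' \<longrightarrow> U' \<in> e {x. \<not> x \<le> y}"
          using eWy unfolding scott_open_free_def by blast
        ultimately show "U \<in> e {x. \<not> x \<le> y}" using y(2) by blast
      qed
      have A: "Ob \<subseteq> r (e {x. \<not> x \<le> y})" unfolding Ob_def
        by (rule rmono[OF bas_open[OF Po(1)] eWy sub])
      have B: "r (e {x. \<not> x \<le> y}) = {x. \<not> x \<le> y}" using r3 Wy by blast
      have "y \<in> r (e {x. \<not> x \<le> y})" using A y(1) by (rule subsetD)
      then have "y \<in> {x. \<not> x \<le> y}" unfolding B .
      then have "\<not> y \<le> y" by (simp only: mem_Collect_eq)
      then show False using order_refl[of y] by (rule notE)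
    qed
  qed
  show ?thesis unfolding continuous_lattice_def
  proof (intro allI conjI)
    fix b :: 'a
    show "b = Sup {a. a \<lless> b}"
    proof (rule antisym)
      show "b \<le> Sup {a. a \<lless> b}" by (rule main)
      show "Sup {a. a \<lless> b} \<le> b" by (rule Sup_least) (simp add: wb_le)
    qed
    show "directed_set {a. a \<lless> b}" unfolding directed_set_def
    proof (intro conjI ballI)
      have "bot \<lless> b" unfolding way_below_def directed_set_def
        by (simp add: ex_in_conv)
      then show "{a. a \<lless> b} \<noteq> {}" by blast
    next
      fix x y assume "x \<in> {a. a \<lless> b}" "y \<in> {a. a \<lless> b}"
      then have x: "x \<lless> b" and y: "y \<lless> b" by auto
      have "sup x y \<lless> b" unfolding way_below_def
      proof (intro allI impI)
        fix D :: "'a set" assume D: "directed_set D" "b \<le> Sup D"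
        then obtain d1 d2 where "d1 \<in> D" "x \<le> d1" "d2 \<in> D" "y \<le> d2"
          using x y unfolding way_below_def by blast
        then obtain z where "z \<in> D" "d1 \<le> z" "d2 \<le> z" using D unfolding directed_set_def by blast
        then show "\<exists>d\<in>D. sup x y \<le> d" using \<open>x \<le> d1\<close> \<open>y \<le> d2\<close> by (meson le_sup_iff order_trans)
      qed
      then show "\<exists>z\<in>{a. a \<lless> b}. x \<le> z \<and> y \<le> z" by force
    qed
  qed
qed

end
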